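(* Let $\mathcal{H}$ be a real Hilbert space, $N\geq1$, $i\in\{1,\ldots,N\}$, and $f_i\in\Gamma_0(\mathcal{H})$ with $\operatorname{dom}f_i=\mathcal{H}$. Let $\phi=\iota_{]-\infty,0]}$ and define $B_i\colon\mathcal{H}\times\mathbb{R}^N\to2^{\mathcal{H}\times\mathbb{R}^N}$ by $B_i(x,p)=\left(p_i\partial f_i(x),\ \partial\phi^*(p_i)e_i-f_i(x)e_i\right)$, where $e_i$ is the $i$-th canonical vector of $\mathbb{R}^N$. Then: (i) $B_i$ is maximally monotone. (ii) Let $(x,p)\in\mathcal{H}\times\mathbb{R}^N$, $\gamma>0$, and let $\overline{\omega}$ be the unique real number in $[0,+\infty[$ such that $\overline{\omega}=0$ if $p_i+\gamma f_i(x)\leq0$ and $\overline{\omega}=p_i+\gamma f_i(P_{\gamma\overline{\omega}}f_i(x))$ if $p_i+\gamma f_i(x)>0$. Then $J_{\gamma B_i}(x,p)=(x,\omega)$ if $p_i+\gamma f_i(x)\leq0$ and $J_{\gamma B_i}(x,p)=(P_{\gamma\omega_i}f_i(x),\omega)$ if $p_i+\gamma f_i(x)>0$, where $\omega_i=\overline{\omega}$ and $\omega_j=p_j$ for all $j\neq i$.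
   Context: $\Gamma_0(\mathcal{H})$: proper lsc convex functions. $\iota_S$ is the indicator function of $S$ ($0$ on $S$, $+\infty$ outside); $\phi^*$ is the Fenchel conjugate, so $\phi^*=\iota_{[0,+\infty[}$ and $\partial\phi^*(s)$ is the normal cone to $[0,+\infty[$ at $s$ (empty if $s<0$). $\partial$ is the convex subdifferential. $J_A=(\mathrm{Id}+A)^{-1}$ is the resolvent. $P_\mu g(x)=\operatorname{argmin}_y\{g(y)+\frac1{2\mu}\|x-y\|^2\}$ for $\mu>0$, and $P_0 g=\mathrm{Id}$. $\mathcal{H}\times\mathbb{R}^N$ carries the product Hilbert structure. *)

theory Defs
  imports "HOL-Analysis.Analysis"
begin

text \<open>Extended-real-valued functions model functions into ]-inf,+inf]; the Hilbert space
  is a type of class real_inner + complete_space.\<close>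

definition lsc :: "('a::topological_space \<Rightarrow> real) \<Rightarrow> bool" where
  "lsc f \<longleftrightarrow> (\<forall>c. closed {x. f x \<le> c})"

definition indic :: "'a set \<Rightarrow> 'a \<Rightarrow> ereal" where
  "indic S x = (if x \<in> S then 0 else \<infinity>)"

definition fconj :: "('a::real_inner \<Rightarrow> ereal) \<Rightarrow> 'a \<Rightarrow> ereal" where
  "fconj g u = (SUP y. ereal (inner u y) - g y)"

definition subdiff :: "('a::real_inner \<Rightarrow> ereal) \<Rightarrow> 'a \<Rightarrow> 'a set" where
  "subdiff g x = {u. g x \<noteq> \<infinity> \<and> (\<forall>y. g x + ereal (inner u (y - x)) \<le> g y)}"

definition phi :: "real \<Rightarrow> ereal" where
  "phi = indic {..0}"

definition monotone_op :: "('a::real_inner \<Rightarrow> 'a set) \<Rightarrow> bool" where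
  "monotone_op A \<longleftrightarrow> (\<forall>x y u v. u \<in> A x \<longrightarrow> v \<in> A y \<longrightarrow> 0 \<le> inner (x - y) (u - v))"

definition max_monotone :: "('a::real_inner \<Rightarrow> 'a set) \<Rightarrow> bool" where
  "max_monotone A \<longleftrightarrow> monotone_op A \<and>
     (\<forall>A'. monotone_op A' \<and> (\<forall>x. A x \<subseteq> A' x) \<longrightarrow> A' = A)"

text \<open>Resolvent J_A = (Id + A)^-1, as a set-valued map.\<close>
definition resolvent :: "('a::real_vector \<Rightarrow> 'a set) \<Rightarrow> 'a \<Rightarrow> 'a set" where
  "resolvent A z = {w. z \<in> (\<lambda>v. w + v) ` A w}"

definition scale_op :: "real \<Rightarrow> ('a::real_vector \<Rightarrow> 'a set) \<Rightarrow> 'a \<Rightarrow> 'a set" where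
  "scale_op \<gamma> A z = (\<lambda>v. \<gamma> *\<^sub>R v) ` A z"

definition prox :: "real \<Rightarrow> ('a::real_normed_vector \<Rightarrow> real) \<Rightarrow> 'a \<Rightarrow> 'a" where
  "prox \<mu> g x = (if \<mu> = 0 then x else
     (THE y. \<forall>z. g y + (norm (x - y))\<^sup>2 / (2 * \<mu>) \<le> g z + (norm (x - z))\<^sup>2 / (2 * \<mu>)))"

definition B_op :: "('n \<Rightarrow> 'a::real_inner \<Rightarrow> real) \<Rightarrow> 'n::finite \<Rightarrow> 'a \<times> (real^'n) \<Rightarrow> ('a \<times> (real^'n)) set" where
  "B_op f i = (\<lambda>(x, p). {(p $ i *\<^sub>R u, t *\<^sub>R axis i 1 - f i x *\<^sub>R axis i 1) | u t.
       u \<in> subdiff (\<lambda>y. ereal (f i y)) x \<and> t \<in> subdiff (fconj phi) (p $ i)})"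

end

theory Submission
  imports Defs
begin

definition Gf :: "('a::real_normed_vector \<Rightarrow> real) \<Rightarrow> real \<Rightarrow> 'a \<Rightarrow> 'a \<Rightarrow> real" where
  "Gf g \<mu> x y = g y + (norm (x - y))\<^sup>2 / (2 * \<mu>)"

lemma small_t:
  fixes A B :: real
  assumes "\<And>t. 0 < t \<Longrightarrow> t \<le> 1 \<Longrightarrow> 0 \<le> A + t * B"
  shows "0 \<le> A"
proof (rule ccontr)
  assume "\<not> 0 \<le> A"
  hence A: "A < 0" by simp
  define t where "t = min 1 (-A/(2*\<bar>B\<bar>+1))"
  have t0: "t > 0" using A by (simp add: t_def divide_neg_pos)
  have t1: "t \<le> 1" by (simp add: t_def)
  have "t * B \<le> t * \<bar>B\<bar>" using t0 by (simp add: mult_left_mono)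
  also have "\<dots> \<le> (-A/(2*\<bar>B\<bar>+1)) * \<bar>B\<bar>" by (rule mult_right_mono) (auto simp: t_def)
  also have "\<dots> < -A/2"
  proof -
    have "(-A/(2*\<bar>B\<bar>+1)) * \<bar>B\<bar> = -A * (\<bar>B\<bar>/(2*\<bar>B\<bar>+1))" by simp
    also have "\<dots> < -A * (1/2)"
      using A by (intro mult_strict_left_mono) (auto simp: field_simps)
    finally show ?thesis by simp
  qed
  finally have "A + t * B < 0" using A by linarith
  with assms[OF t0 t1] show False by simp
qed

lemma norm_mid:
  fixes x a b :: "'a::real_inner"
  shows "(norm (x - ((1/2) *\<^sub>R a + (1/2) *\<^sub>R b)))\<^sup>2 =
     ((norm (x-a))\<^sup>2 + (norm (x-b))\<^sup>2)/2 - (norm (a-b))\<^sup>2/4"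
  unfolding power2_norm_eq_inner
  by (simp add: inner_diff inner_add inner_commute algebra_simps) (simp add: field_simps)

lemma norm_seg:
  fixes x y z :: "'a::real_inner"
  shows "(norm (x - (y + t *\<^sub>R (z - y))))\<^sup>2 =
     (norm (x-y))\<^sup>2 - 2 * t * inner (x - y) (z - y) + t\<^sup>2 * (norm (z-y))\<^sup>2"
  unfolding power2_norm_eq_inner
  by (simp add: inner_diff inner_add inner_commute algebra_simps power2_eq_square)

lemma mid_ineq:
  fixes g :: "'a::real_inner \<Rightarrow> real"
  assumes conv: "convex_on UNIV g" and mu: "\<mu> > 0"
  shows "Gf g \<mu> x ((1/2) *\<^sub>R a + (1/2) *\<^sub>R b) \<le>
     (Gf g \<mu> x a + Gf g \<mu> x b)/2 - (norm (a-b))\<^sup>2/(8*\<mu>)"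
proof -
  have "g ((1 - 1/2) *\<^sub>R a + (1/2) *\<^sub>R b) \<le> (1 - 1/2) * g a + (1/2) * g b"
    by (rule convex_onD[OF conv]) auto
  hence "g ((1/2) *\<^sub>R a + (1/2) *\<^sub>R b) \<le> (g a + g b)/2" by simp
  moreover have "((norm (x-a))\<^sup>2/2 + (norm (x-b))\<^sup>2/2 - (norm (a-b))\<^sup>2/4) / (2*\<mu>) =
     ((norm (x-a))\<^sup>2/(2*\<mu>) + (norm (x-b))\<^sup>2/(2*\<mu>))/2 - (norm (a-b))\<^sup>2/(8*\<mu>)"
    using mu by (simp add: field_simps)
  ultimately show ?thesis unfolding Gf_def norm_mid by (simp add: add_divide_distrib)
qed


lemma min_unique:
  fixes g :: "'a::real_inner \<Rightarrow> real"
  assumes conv: "convex_on UNIV g" and mu: "\<mu> > 0"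
    and m1: "\<forall>z. Gf g \<mu> x y1 \<le> Gf g \<mu> x z" and m2: "\<forall>z. Gf g \<mu> x y2 \<le> Gf g \<mu> x z"
  shows "y1 = y2"
proof -
  have e: "Gf g \<mu> x y1 = Gf g \<mu> x y2" using m1 m2 by (meson order_antisym)
  have "Gf g \<mu> x y1 \<le> Gf g \<mu> x ((1/2) *\<^sub>R y1 + (1/2) *\<^sub>R y2)" using m1 by blast
  also have "\<dots> \<le> (Gf g \<mu> x y1 + Gf g \<mu> x y2)/2 - (norm (y1-y2))\<^sup>2/(8*\<mu>)"
    by (rule mid_ineq[OF conv mu])
  finally have "(norm (y1-y2))\<^sup>2/(8*\<mu>) \<le> 0" using e by simp
  hence "(norm (y1-y2))\<^sup>2 \<le> 0" using mu by (simp add: divide_le_0_iff)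
  thus ?thesis by simp
qed

lemma lsc_sum_closed:
  fixes g :: "'a::real_normed_vector \<Rightarrow> real"
  assumes lsc: "lsc g" and h: "continuous_on UNIV h"
  shows "closed {z. g z + h z \<le> c}"
proof -
  have "open {z. c < g z + h z}"
  proof (subst open_subopen, intro ballI)
    fix z0 assume "z0 \<in> {z. c < g z + h z}"
    hence z0: "c < g z0 + h z0" by simp
    define d where "d = (g z0 + h z0 - c)/2"
    have d: "d > 0" using z0 by (simp add: d_def)
    define T1 where "T1 = {z. g z0 - d < g z}"
    define T2 where "T2 = {z. h z0 - d < h z}"
    have "closed {z. g z \<le> g z0 - d}" using lsc unfolding lsc_def by blast
    hence o1: "open T1" unfolding T1_def by (simp add: open_closed Collect_neg_eq[symmetric] not_less)
    have o2: "open T2" unfolding T2_def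
      by (rule open_Collect_less) (auto intro: continuous_on_subset[OF h] continuous_on_const)
    have "T1 \<inter> T2 \<subseteq> {z. c < g z + h z}" unfolding T1_def T2_def d_def by (auto simp: field_simps)
    moreover have "z0 \<in> T1 \<inter> T2" using d unfolding T1_def T2_def by auto
    ultimately show "\<exists>T. open T \<and> z0 \<in> T \<and> T \<subseteq> {z. c < g z + h z}"
      using o1 o2 by blast
  qed
  thus ?thesis by (simp add: closed_def Compl_eq not_le[symmetric] Collect_neg_eq[symmetric])
qed


lemma aux_lin: "(m::real) \<le> (A + B)/2 - X \<Longrightarrow> A \<le> m + r \<Longrightarrow> B \<le> m + r \<Longrightarrow> X \<le> r"
  by argo

lemma min_exists:
  fixes g :: "'a::{real_inner,complete_space} \<Rightarrow> real"
  assumes conv: "convex_on UNIV g" and lsc: "lsc g" and mu: "\<mu> > 0"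
    and bd: "\<forall>z. L \<le> Gf g \<mu> x z"
  shows "\<exists>y. \<forall>z. Gf g \<mu> x y \<le> Gf g \<mu> x z"
proof -
  let ?G = "Gf g \<mu> x"
  define m where "m = Inf (range ?G)"
  have bdd: "bdd_below (range ?G)" using bd by (auto intro: bdd_belowI)
  have mle: "\<And>z. m \<le> ?G z" unfolding m_def using bdd by (simp add: cINF_lower)
  define S where "S n = {z. ?G z \<le> m + 1/(real n+1)}" for n
  have cl: "closed (S n)" for n
  proof -
    have "continuous_on UNIV (\<lambda>z. (norm (x - z))\<^sup>2 / (2 * \<mu>))"
      by (intro continuous_intros) (use mu in auto)
    from lsc_sum_closed[OF lsc this] show ?thesis unfolding S_def Gf_def .
  qed
  have ne: "S n \<noteq> {}" for n
  proof -
    have "Inf (range ?G) < m + 1/(real n+1)" unfolding m_def by (simp add: add_pos_pos)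
    then obtain v where "v \<in> range ?G" "v < m + 1/(real n+1)" using cInf_lessD by blast
    then obtain z where "?G z < m + 1/(real n+1)" by auto
    thus ?thesis unfolding S_def by (auto intro: less_imp_le)
  qed
  have dec: "S n \<subseteq> S k" if "k \<le> n" for k n
  proof -
    have "1/(real n+1) \<le> 1/(real k+1)" using that by (simp add: frac_le)
    thus ?thesis unfolding S_def by force
  qed
  have diam: "\<exists>n. \<forall>a\<in>S n. \<forall>b\<in>S n. dist a b < \<epsilon>" if e: "\<epsilon> > 0" for \<epsilon>
  proof -
    obtain n :: nat where n: "8*\<mu>/\<epsilon>\<^sup>2 < real n" using reals_Archimedean2 by blast
    have n1: "8*\<mu>/(real n+1) < \<epsilon>\<^sup>2"
    proof -
      have "8*\<mu> < \<epsilon>\<^sup>2 * real n" using n e by (simp add: field_simps)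
      also have "\<dots> \<le> \<epsilon>\<^sup>2 * (real n + 1)" using e by simp
      finally show ?thesis by (simp add: field_simps)
    qed
    show ?thesis
    proof (intro exI ballI)
      fix a b assume a: "a \<in> S n" and b: "b \<in> S n"
      have "m \<le> ?G ((1/2) *\<^sub>R a + (1/2) *\<^sub>R b)" by (rule mle)
      also have "\<dots> \<le> (?G a + ?G b)/2 - (norm (a-b))\<^sup>2/(8*\<mu>)" by (rule mid_ineq[OF conv mu])
      finally have h1: "m \<le> (?G a + ?G b)/2 - (norm (a-b))\<^sup>2/(8*\<mu>)" .
      have h2: "?G a \<le> m + 1/(real n+1)" "?G b \<le> m + 1/(real n+1)" using a b unfolding S_def by auto
      have "(norm (a-b))\<^sup>2/(8*\<mu>) \<le> 1/(real n+1)" 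
        using h1 h2 by (rule aux_lin)
      hence "(norm (a-b))\<^sup>2 \<le> 8*\<mu>/(real n+1)" using mu by (simp add: field_simps)
      hence "(norm (a-b))\<^sup>2 < \<epsilon>\<^sup>2" using n1 by linarith
      hence "norm (a-b) < \<epsilon>" using e by (simp add: power_less_imp_less_base)
      thus "dist a b < \<epsilon>" by (simp add: dist_norm)
    qed
  qed
  obtain a where a: "\<And>n. a \<in> S n" using decreasing_closed_nest[OF cl ne dec diam] by blast
  have "?G a \<le> m"
  proof (rule ccontr)
    assume "\<not> ?G a \<le> m"
    hence "0 < ?G a - m" by simp
    then obtain n where "inverse (real (Suc n)) < ?G a - m" by (rule reals_Archimedean[THEN exE])
    moreover have "?G a \<le> m + 1/(real n+1)" using a[of n] unfolding S_def by simp
    moreover have "inverse (real (Suc n)) = 1/(real n+1)" by (simp add: inverse_eq_divide)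
    ultimately show False by linarith
  qed
  thus ?thesis using mle by (meson order_trans)
qed


lemma prox_eq:
  fixes g :: "'a::real_inner \<Rightarrow> real"
  assumes conv: "convex_on UNIV g" and mu: "\<mu> > 0"
    and m: "\<forall>z. Gf g \<mu> x y \<le> Gf g \<mu> x z"
  shows "prox \<mu> g x = y"
proof -
  have "(THE y. \<forall>z. g y + (norm (x - y))\<^sup>2 / (2 * \<mu>) \<le> g z + (norm (x - z))\<^sup>2 / (2 * \<mu>)) = y"
  proof (rule the_equality)
    show "\<forall>z. g y + (norm (x - y))\<^sup>2 / (2 * \<mu>) \<le> g z + (norm (x - z))\<^sup>2 / (2 * \<mu>)"
      using m unfolding Gf_def .
    fix y' assume "\<forall>z. g y' + (norm (x - y'))\<^sup>2 / (2 * \<mu>) \<le> g z + (norm (x - z))\<^sup>2 / (2 * \<mu>)"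
    hence "\<forall>z. Gf g \<mu> x y' \<le> Gf g \<mu> x z" unfolding Gf_def .
    thus "y' = y" using min_unique[OF conv mu _ m] by blast
  qed
  thus ?thesis using mu unfolding prox_def by simp
qed

lemma prox_min:
  fixes g :: "'a::{real_inner,complete_space} \<Rightarrow> real"
  assumes conv: "convex_on UNIV g" and lsc: "lsc g" and mu: "\<mu> > 0"
    and bd: "\<forall>z. L \<le> Gf g \<mu> x z"
  shows "\<forall>z. Gf g \<mu> x (prox \<mu> g x) \<le> Gf g \<mu> x z"
proof -
  obtain y where y: "\<forall>z. Gf g \<mu> x y \<le> Gf g \<mu> x z" using min_exists[OF conv lsc mu bd] by blast
  thus ?thesis using prox_eq[OF conv mu y] by simp
qed

lemma convex_seg:
  fixes g :: "'a::real_vector \<Rightarrow> real"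
  assumes conv: "convex_on UNIV g" and t: "0 \<le> t" "t \<le> 1"
  shows "g (y + t *\<^sub>R (z - y)) \<le> g y + t * (g z - g y)"
proof -
  have "y + t *\<^sub>R (z - y) = (1 - t) *\<^sub>R y + t *\<^sub>R z" by (simp add: algebra_simps)
  moreover have "g ((1 - t) *\<^sub>R y + t *\<^sub>R z) \<le> (1 - t) * g y + t * g z"
    by (rule convex_onD[OF conv]) (use t in auto)
  ultimately show ?thesis by (simp add: algebra_simps)
qed

lemma min_VI:
  fixes g :: "'a::real_inner \<Rightarrow> real"
  assumes mu: "\<mu> > 0" and m: "\<forall>z. Gf g \<mu> x y \<le> Gf g \<mu> x z"
    and bnd: "\<And>t. 0 < t \<Longrightarrow> t \<le> 1 \<Longrightarrow> g (y + t *\<^sub>R (z - y)) - g y \<le> t * D + t\<^sup>2 * E"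
  shows "inner (x - y) (z - y) \<le> \<mu> * D"
proof -
  define I where "I = inner (x - y) (z - y)"
  define N where "N = (norm (z - y))\<^sup>2"
  have "0 \<le> (D - I/\<mu>) + t * (E + N/(2*\<mu>))" if t: "0 < t" "t \<le> 1" for t
  proof -
    have "Gf g \<mu> x y \<le> Gf g \<mu> x (y + t *\<^sub>R (z - y))" using m by blast
    hence "g y + (norm (x-y))\<^sup>2/(2*\<mu>) \<le> g (y + t *\<^sub>R (z - y)) +
        ((norm (x-y))\<^sup>2 - 2*t*I + t\<^sup>2 * N)/(2*\<mu>)"
      unfolding Gf_def norm_seg I_def N_def .
    hence "0 \<le> (g (y + t *\<^sub>R (z - y)) - g y) + (- 2*t*I + t\<^sup>2 * N)/(2*\<mu>)"
      by (simp add: diff_divide_distrib add_divide_distrib)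
    hence "0 \<le> t * D + t\<^sup>2 * E + (- 2*t*I + t\<^sup>2 * N)/(2*\<mu>)" using bnd[OF t] by linarith
    also have "\<dots> = t * ((D - I/\<mu>) + t * (E + N/(2*\<mu>)))"
      using mu by (simp add: field_simps power2_eq_square)
    finally show ?thesis using t by (simp add: zero_le_mult_iff)
  qed
  hence "0 \<le> D - I/\<mu>" by (rule small_t)
  thus ?thesis using mu unfolding I_def by (simp add: field_simps)
qed

lemma min_VI_convex:
  fixes g :: "'a::real_inner \<Rightarrow> real"
  assumes conv: "convex_on UNIV g" and mu: "\<mu> > 0" and m: "\<forall>z. Gf g \<mu> x y \<le> Gf g \<mu> x z"
  shows "inner (x - y) (z - y) \<le> \<mu> * (g z - g y)"
proof (rule min_VI[OF mu m])
  fix t :: real assume "0 < t" "t \<le> 1"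
  thus "g (y + t *\<^sub>R (z - y)) - g y \<le> t * (g z - g y) + t\<^sup>2 * 0"
    using convex_seg[OF conv, of t y z] by simp
qed

lemma VI_min:
  fixes g :: "'a::real_inner \<Rightarrow> real"
  assumes mu: "\<mu> > 0" and vi: "\<forall>z. inner (x - y) (z - y) \<le> \<mu> * (g z - g y)"
  shows "\<forall>z. Gf g \<mu> x y \<le> Gf g \<mu> x z"
proof
  fix z
  have e: "(norm (x - z))\<^sup>2 = (norm (x-y))\<^sup>2 - 2 * inner (x - y) (z - y) + (norm (z-y))\<^sup>2"
    using norm_seg[of x y 1 z] by simp
  have "inner (x - y) (z - y) / \<mu> \<le> g z - g y" using vi mu by (simp add: field_simps)
  moreover have "0 \<le> (norm (z-y))\<^sup>2/(2*\<mu>)" using mu by simp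
  moreover have "(norm (x - z))\<^sup>2/(2*\<mu>) = (norm (x-y))\<^sup>2/(2*\<mu>) - inner (x - y) (z - y) / \<mu>
      + (norm (z-y))\<^sup>2/(2*\<mu>)" unfolding e using mu by (simp add: field_simps)
  ultimately show "Gf g \<mu> x y \<le> Gf g \<mu> x z" unfolding Gf_def by linarith
qed

lemma lower_bound:
  fixes g :: "'a::real_inner \<Rightarrow> real"
  assumes conv: "convex_on UNIV g" and lsc: "lsc g" and mu: "\<mu> > 0"
  shows "\<exists>L. \<forall>z. L \<le> Gf g \<mu> x z"
proof -
  define U where "U = {z. g x - 1 < g z}"
  have "closed {z. g z \<le> g x - 1}" using lsc unfolding lsc_def by blast
  hence "open U" unfolding U_def by (simp add: open_closed Collect_neg_eq[symmetric] not_less)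
  moreover have "x \<in> U" unfolding U_def by simp
  ultimately obtain r where r: "r > 0" "ball x r \<subseteq> U" using open_contains_ball by blast
  define s where "s = r/2"
  have s: "s > 0" "s < r" using r by (auto simp: s_def)
  have lb: "g x - 1 - norm (z - x)/s \<le> g z" for z
  proof (cases "norm (z - x) < r")
    case True
    hence "z \<in> U" using r by (auto simp: dist_norm norm_minus_commute)
    moreover have "0 \<le> norm (z - x)/s" using s by simp
    ultimately show ?thesis unfolding U_def by simp
  next
    case False
    define n where "n = norm (z - x)"
    have n: "n \<ge> r" using False n_def by simp
    define t where "t = s/n"
    have t: "0 < t" "t \<le> 1" using n s by (auto simp: t_def)
    have "norm ((x + t *\<^sub>R (z - x)) - x) = t * n" using t by (simp add: n_def)
    also have "\<dots> = s" using n s by (simp add: t_def)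
    finally have "x + t *\<^sub>R (z - x) \<in> U" using r s by (auto simp: dist_norm norm_minus_commute)
    hence "g x - 1 < g (x + t *\<^sub>R (z - x))" unfolding U_def by simp
    also have "\<dots> \<le> g x + t * (g z - g x)" using convex_seg[OF conv, of t x z] t by simp
    finally have "-1 < t * (g z - g x)" by simp
    hence "-1/t < g z - g x" using t by (simp add: field_simps)
    moreover have "1/t = n/s" using n s by (simp add: t_def)
    ultimately show ?thesis unfolding n_def by simp
  qed
  show ?thesis
  proof (intro exI allI)
    fix z
    define n where "n = norm (z - x)"
    have "0 \<le> (n - \<mu>/s)\<^sup>2/(2*\<mu>)" using mu by simp
    also have "(n - \<mu>/s)\<^sup>2/(2*\<mu>) = n\<^sup>2/(2*\<mu>) - n/s + \<mu>/(2 * (s * s))"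
      using mu s by (simp add: field_simps power2_eq_square)
    finally have "g x - 1 - \<mu>/(2 * (s * s)) \<le> g z + n\<^sup>2/(2*\<mu>)" using lb[of z] unfolding n_def by linarith
    thus "g x - 1 - \<mu>/(2 * (s * s)) \<le> Gf g \<mu> x z" unfolding Gf_def n_def by (simp add: norm_minus_commute)
  qed
qed

lemma fconj_phi: "fconj phi s = (if 0 \<le> s then 0 else \<infinity>)"
proof (cases "0 \<le> s")
  case True
  have "(SUP y. ereal (inner s y) - phi y) = 0"
  proof (rule antisym)
    show "(SUP y. ereal (inner s y) - phi y) \<le> 0"
    proof (rule SUP_least)
      fix y :: real
      show "ereal (inner s y) - phi y \<le> 0"
      proof (cases "y \<le> 0")
        case True
        hence "s * y \<le> 0" using \<open>0 \<le> s\<close> by (simp add: mult_nonneg_nonpos)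
        thus ?thesis using True by (simp add: phi_def indic_def)
      qed (simp add: phi_def indic_def)
    qed
    show "0 \<le> (SUP y. ereal (inner s y) - phi y)"
      by (rule SUP_upper2[of 0]) (auto simp: phi_def indic_def)
  qed
  thus ?thesis using True by (simp add: fconj_def)
next
  case False
  have "(SUP y. ereal (inner s y) - phi y) = \<infinity>"
  proof (rule SUP_PInfty)
    fix n :: nat
    have "s * (real n / s) = real n" using False by simp
    moreover have "real n / s \<le> 0" using False by (simp add: divide_nonneg_neg)
    ultimately show "\<exists>y\<in>UNIV. ereal (real n) \<le> ereal (inner s y) - phi y"
      by (intro bexI[of _ "real n / s"]) (auto simp: phi_def indic_def)
  qed
  thus ?thesis using False by (simp add: fconj_def)
qed

lemma subdiff_fconj_phi: "t \<in> subdiff (fconj phi) s \<longleftrightarrow> 0 \<le> s \<and> t \<le> 0 \<and> s * t = 0"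
proof
  assume h: "t \<in> subdiff (fconj phi) s"
  hence s: "0 \<le> s" unfolding subdiff_def fconj_phi by (auto split: if_splits)
  have k0: "\<forall>y. fconj phi s + ereal (inner t (y - s)) \<le> fconj phi y" using h unfolding subdiff_def by simp
  have k: "t * (y - s) \<le> 0" if "0 \<le> y" for y
    using k0[rule_format, of y] that s by (simp add: fconj_phi inner_real_def)
  have "t * (s + 1 - s) \<le> 0" using k[of "s+1"] s by simp
  hence t: "t \<le> 0" by simp
  have "t * (0 - s) \<le> 0" using k[of 0] by simp
  hence "0 \<le> s * t" by (simp add: algebra_simps)
  moreover have "s * t \<le> 0" using s t by (simp add: mult_nonneg_nonpos)
  ultimately show "0 \<le> s \<and> t \<le> 0 \<and> s * t = 0" using s t by simp
next
  assume h: "0 \<le> s \<and> t \<le> 0 \<and> s * t = 0"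
  have "ereal (t * (y - s)) \<le> fconj phi y" for y
  proof (cases "0 \<le> y")
    case True
    have "t * (y - s) = t * y - s * t" by (simp add: algebra_simps)
    also have "\<dots> \<le> 0"
    proof -
      have "s * t = 0" using h by blast
      moreover have "t * y \<le> 0" using h True mult_nonpos_nonneg[of t y] by simp
      ultimately show ?thesis by linarith
    qed
    finally show ?thesis using True by (simp add: fconj_phi)
  qed (simp add: fconj_phi)
  thus "t \<in> subdiff (fconj phi) s" using h unfolding subdiff_def by (simp add: fconj_phi inner_real_def)
qed

lemma subdiff_real: "u \<in> subdiff (\<lambda>y. ereal (g y)) x \<longleftrightarrow> (\<forall>y. g x + inner u (y - x) \<le> g y)"
  unfolding subdiff_def by simp

lemma B_op_mem:
  "(a, b) \<in> B_op f i (x, p) \<longleftrightarrow> (\<exists>u t. (\<forall>y. f i x + inner u (y - x) \<le> f i y) \<and>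
     0 \<le> p$i \<and> t \<le> 0 \<and> p$i * t = 0 \<and> a = p$i *\<^sub>R u \<and> b = (t - f i x) *\<^sub>R axis i 1)"
  unfolding B_op_def subdiff_real subdiff_fconj_phi by (auto simp: scaleR_diff_left)

lemma inner_axis_scale: "inner v (c *\<^sub>R axis i (1::real)) = c * v $ i"
  by (simp add: inner_axis)

lemma B_monotone:
  fixes f :: "'n::finite \<Rightarrow> 'a::real_inner \<Rightarrow> real"
  shows "monotone_op (B_op f i)"
  unfolding monotone_op_def
proof (intro allI impI)
  fix z1 z2 :: "'a::real_inner \<times> (real^'n)" and w1 w2
  assume h1: "w1 \<in> B_op f i z1" and h2: "w2 \<in> B_op f i z2"
  obtain x p where z1: "z1 = (x, p)" by (cases z1)
  obtain y q where z2: "z2 = (y, q)" by (cases z2)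
  obtain a1 b1 where w1: "w1 = (a1, b1)" by (cases w1)
  obtain a2 b2 where w2: "w2 = (a2, b2)" by (cases w2)
  obtain u t where u: "\<forall>z. f i x + inner u (z - x) \<le> f i z" "0 \<le> p$i" "t \<le> 0" "p$i * t = 0"
     "a1 = p$i *\<^sub>R u" "b1 = (t - f i x) *\<^sub>R axis i 1"
    using h1 unfolding z1 w1 B_op_mem by blast
  obtain v s where v: "\<forall>z. f i y + inner v (z - y) \<le> f i z" "0 \<le> q$i" "s \<le> 0" "q$i * s = 0"
     "a2 = q$i *\<^sub>R v" "b2 = (s - f i y) *\<^sub>R axis i 1"
    using h2 unfolding z2 w2 B_op_mem by blast
  have e1: "inner (x - y) (a1 - a2) = p$i * inner (x - y) u - q$i * inner (x - y) v"
    using u v by (simp add: inner_diff_right)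
  have e2: "inner (p - q) (b1 - b2) = ((t - f i x) - (s - f i y)) * (p$i - q$i)"
    using u v by (simp add: scaleR_diff_left[symmetric] inner_axis_scale inner_axis inner_real_def)
  have i1: "inner (x - y) u \<ge> f i x - f i y"
    using u(1)[rule_format, of y] by (simp add: inner_commute inner_diff_left inner_diff_right)
  have i2: "inner (x - y) v \<le> f i x - f i y"
    using v(1)[rule_format, of x] by (simp add: inner_commute inner_diff_left inner_diff_right)
  have m1: "p$i * inner (x - y) u \<ge> p$i * (f i x - f i y)" using i1 u(2) by (rule mult_left_mono)
  have m2: "q$i * inner (x - y) v \<le> q$i * (f i x - f i y)" using i2 v(2) by (rule mult_left_mono)
  have m3: "p$i * s \<le> 0" using u(2) v(3) by (simp add: mult_nonneg_nonpos)
  have m4: "q$i * t \<le> 0" using v(2) u(3) by (simp add: mult_nonneg_nonpos)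
  have "0 \<le> p$i * inner (x - y) u - q$i * inner (x - y) v + ((t - f i x) - (s - f i y)) * (p$i - q$i)"
  proof -
    have eq: "p$i * inner (x - y) u - q$i * inner (x - y) v + ((t - f i x) - (s - f i y)) * (p$i - q$i)
      = (p$i * inner (x - y) u - p$i * (f i x - f i y)) - (q$i * inner (x - y) v - q$i * (f i x - f i y))
        + p$i * t + q$i * s - p$i * s - q$i * t" by (simp add: algebra_simps)
    show ?thesis unfolding eq using m1 m2 m3 m4 u(4) v(4) by linarith
  qed
  thus "0 \<le> inner (z1 - z2) (w1 - w2)" unfolding z1 z2 w1 w2 using e1 e2 by simp
qed

lemma res_mem:
  fixes f :: "'n::finite \<Rightarrow> 'a::real_inner \<Rightarrow> real"
  shows "(y, q) \<in> resolvent (scale_op \<gamma> (B_op f i)) (x, p) \<longleftrightarrow>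
    (\<exists>u t. (\<forall>z. f i y + inner u (z - y) \<le> f i z) \<and> 0 \<le> q$i \<and> t \<le> 0 \<and> q$i * t = 0 \<and>
       x = y + (\<gamma> * q$i) *\<^sub>R u \<and> p = q + (\<gamma> * (t - f i y)) *\<^sub>R axis i 1)"
  (is "_ \<longleftrightarrow> ?R")
proof -
  have "(y, q) \<in> resolvent (scale_op \<gamma> (B_op f i)) (x, p) \<longleftrightarrow>
     (\<exists>a b. (a, b) \<in> B_op f i (y, q) \<and> x = y + \<gamma> *\<^sub>R a \<and> p = q + \<gamma> *\<^sub>R b)"
  proof -
    have "(y, q) \<in> resolvent (scale_op \<gamma> (B_op f i)) (x, p) \<longleftrightarrow>
       (\<exists>b\<in>B_op f i (y, q). (x, p) = (y, q) + \<gamma> *\<^sub>R b)"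
      unfolding resolvent_def scale_op_def by (simp add: image_image image_iff)
    also have "\<dots> \<longleftrightarrow> (\<exists>a b. (a, b) \<in> B_op f i (y, q) \<and> x = y + \<gamma> *\<^sub>R a \<and> p = q + \<gamma> *\<^sub>R b)"
    proof
      assume "\<exists>b\<in>B_op f i (y, q). (x, p) = (y, q) + \<gamma> *\<^sub>R b"
      then obtain b where b: "b \<in> B_op f i (y, q)" "(x, p) = (y, q) + \<gamma> *\<^sub>R b" by blast
      obtain a1 b1 where "b = (a1, b1)" by (cases b)
      thus "\<exists>a b. (a, b) \<in> B_op f i (y, q) \<and> x = y + \<gamma> *\<^sub>R a \<and> p = q + \<gamma> *\<^sub>R b" using b by auto
    next
      assume "\<exists>a b. (a, b) \<in> B_op f i (y, q) \<and> x = y + \<gamma> *\<^sub>R a \<and> p = q + \<gamma> *\<^sub>R b"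
      then obtain a b where "(a, b) \<in> B_op f i (y, q)" "x = y + \<gamma> *\<^sub>R a" "p = q + \<gamma> *\<^sub>R b" by blast
      thus "\<exists>b\<in>B_op f i (y, q). (x, p) = (y, q) + \<gamma> *\<^sub>R b" by (intro bexI[of _ "(a, b)"]) auto
    qed
    finally show ?thesis .
  qed
  also have "\<dots> \<longleftrightarrow> ?R" unfolding B_op_mem
  proof (intro iffI; elim exE conjE)
    fix a b u t assume "\<forall>z. f i y + inner u (z - y) \<le> f i z" "0 \<le> q$i" "t \<le> 0" "q$i * t = 0"
      "a = q$i *\<^sub>R u" "b = (t - f i y) *\<^sub>R axis i 1" "x = y + \<gamma> *\<^sub>R a" "p = q + \<gamma> *\<^sub>R b"
    thus ?R by (intro exI[of _ u] exI[of _ t]) simp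
  next
    fix u t assume "\<forall>z. f i y + inner u (z - y) \<le> f i z" "0 \<le> q$i" "t \<le> 0" "q$i * t = 0"
       "x = y + (\<gamma> * q$i) *\<^sub>R u" "p = q + (\<gamma> * (t - f i y)) *\<^sub>R axis i 1"
    thus "\<exists>a b. (\<exists>u t. (\<forall>z. f i y + inner u (z - y) \<le> f i z) \<and> 0 \<le> q$i \<and> t \<le> 0 \<and> q$i * t = 0 \<and>
        a = q$i *\<^sub>R u \<and> b = (t - f i y) *\<^sub>R axis i 1) \<and> x = y + \<gamma> *\<^sub>R a \<and> p = q + \<gamma> *\<^sub>R b"
      by (intro exI[of _ "q$i *\<^sub>R u"] exI[of _ "(t - f i y) *\<^sub>R axis i 1"] conjI exI[of _ u] exI[of _ t]) auto
  qed
  finally show ?thesis .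
qed

lemma res_char:
  fixes f :: "'n::finite \<Rightarrow> 'a::real_inner \<Rightarrow> real"
  assumes g: "\<gamma> > 0" and sub_ex: "\<And>x. \<exists>u. \<forall>z. f i x + inner u (z - x) \<le> f i z"
  shows "(y, q) \<in> resolvent (scale_op \<gamma> (B_op f i)) (x, p) \<longleftrightarrow>
    (\<forall>j. j \<noteq> i \<longrightarrow> q$j = p$j) \<and>
    ((q$i = 0 \<and> y = x \<and> p$i + \<gamma> * f i x \<le> 0) \<or>
     (q$i > 0 \<and> q$i = p$i + \<gamma> * f i y \<and> (\<forall>z. inner (x - y) (z - y) \<le> (\<gamma> * q$i) * (f i z - f i y))))"
  (is "?L \<longleftrightarrow> ?R")
proof
  assume ?L
  then obtain u t where h: "\<forall>z. f i y + inner u (z - y) \<le> f i z" "0 \<le> q$i" "t \<le> 0" "q$i * t = 0"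
       "x = y + (\<gamma> * q$i) *\<^sub>R u" "p = q + (\<gamma> * (t - f i y)) *\<^sub>R axis i 1"
    unfolding res_mem by blast
  have pj: "p$j = q$j" if "j \<noteq> i" for j using h(6) that by (simp add: axis_def)
  have pi: "p$i = q$i + \<gamma> * (t - f i y)" using h(6) by simp
  show ?R
  proof (cases "q$i = 0")
    case True
    hence "x = y" using h(5) by simp
    moreover have "p$i + \<gamma> * f i x = \<gamma> * t" using pi True \<open>x = y\<close> by (simp add: algebra_simps)
    moreover have "\<gamma> * t \<le> 0" using g h(3) by (simp add: mult_nonneg_nonpos)
    ultimately show ?R using pj True by auto
  next
    case False
    hence qi: "q$i > 0" using h(2) by simp
    hence t: "t = 0" using h(4) by simp
    have "inner (x - y) (z - y) \<le> (\<gamma> * q$i) * (f i z - f i y)" for z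
    proof -
      have "inner (x - y) (z - y) = (\<gamma> * q$i) * inner u (z - y)" using h(5) by simp
      also have "\<dots> \<le> (\<gamma> * q$i) * (f i z - f i y)"
        using h(1)[rule_format, of z] g qi by (intro mult_left_mono) auto
      finally show ?thesis .
    qed
    thus ?R using pj pi qi t by auto
  qed
next
  assume R: ?R
  hence pj: "\<And>j. j \<noteq> i \<Longrightarrow> q$j = p$j" by blast
  from R show ?L
  proof (elim conjE disjE)
    assume a: "q$i = 0" "y = x" "p$i + \<gamma> * f i x \<le> 0"
    define t where "t = (p$i + \<gamma> * f i x) / \<gamma>"
    have t: "t \<le> 0" using a g by (simp add: t_def divide_nonpos_pos)
    have "p = q + (\<gamma> * (t - f i y)) *\<^sub>R axis i 1"
      unfolding vec_eq_iff
    proof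
      fix j show "p$j = (q + (\<gamma> * (t - f i y)) *\<^sub>R axis i 1)$j"
        using pj[of j] a g by (cases "j = i") (auto simp: axis_def t_def field_simps)
    qed
    obtain u where u: "\<forall>z. f i x + inner u (z - x) \<le> f i z" using sub_ex by blast
    show ?L unfolding res_mem using a t u \<open>p = _\<close> by (intro exI[of _ u] exI[of _ t]) auto
  next
    assume a: "q$i > 0" "q$i = p$i + \<gamma> * f i y"
      "\<forall>z. inner (x - y) (z - y) \<le> (\<gamma> * q$i) * (f i z - f i y)"
    define u where "u = (1 / (\<gamma> * q$i)) *\<^sub>R (x - y)"
    have gq: "\<gamma> * q$i > 0" using a g by simp
    have sub: "f i y + inner u (z - y) \<le> f i z" for z
    proof -
      have "inner u (z - y) = inner (x - y) (z - y) / (\<gamma> * q$i)" by (simp add: u_def)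
      also have "\<dots> \<le> f i z - f i y" using a(3) gq by (simp add: divide_le_eq mult.commute)
      finally show ?thesis by simp
    qed
    have one: "(\<gamma> * q$i) * (1 / (\<gamma> * q$i)) = 1" using gq by (metis less_irrefl mult.commute nonzero_divide_eq_eq times_divide_eq_left)
    have "(\<gamma> * q$i) *\<^sub>R u = x - y" unfolding u_def scaleR_scaleR one by simp
    hence xe: "x = y + (\<gamma> * q$i) *\<^sub>R u" by simp
    have pe: "p = q + (\<gamma> * (0 - f i y)) *\<^sub>R axis i 1"
      unfolding vec_eq_iff
    proof
      fix j show "p$j = (q + (\<gamma> * (0 - f i y)) *\<^sub>R axis i 1)$j"
        using pj[of j] a by (cases "j = i") (auto simp: axis_def)
    qed
    show ?L unfolding res_mem
    proof (intro exI[of _ u] exI[of _ 0] conjI)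
      show "\<forall>z. f i y + inner u (z - y) \<le> f i z" using sub by blast
      show "0 \<le> q$i" using a(1) by simp
    qed (use xe pe in auto)
  qed
qed

lemma phi_mono:
  fixes C D :: real assumes "C \<le> D" shows "(max C 0)\<^sup>2 \<le> (max D 0)\<^sup>2"
  by (rule power_mono) (use assms in auto)

lemma sq_conv:
  fixes a b t :: real assumes "0 \<le> t" "t \<le> 1"
  shows "((1 - t) * a + t * b)\<^sup>2 \<le> (1 - t) * a\<^sup>2 + t * b\<^sup>2"
proof -
  have "(1 - t) * a\<^sup>2 + t * b\<^sup>2 - ((1 - t) * a + t * b)\<^sup>2 = t * (1 - t) * (a - b)\<^sup>2"
    by (simp add: power2_eq_square algebra_simps)
  moreover have "0 \<le> t * (1 - t) * (a - b)\<^sup>2" using assms by simp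
  ultimately show ?thesis by linarith
qed

lemma phi_conv:
  fixes A B t :: real assumes t: "0 \<le> t" "t \<le> 1"
  shows "(max ((1 - t) * A + t * B) 0)\<^sup>2 \<le> (1 - t) * (max A 0)\<^sup>2 + t * (max B 0)\<^sup>2"
proof -
  have "max ((1 - t) * A + t * B) 0 \<le> (1 - t) * max A 0 + t * max B 0"
  proof -
    have "(1 - t) * A \<le> (1 - t) * max A 0" using t by (intro mult_left_mono) auto
    moreover have "t * B \<le> t * max B 0" using t by (intro mult_left_mono) auto
    moreover have "0 \<le> (1 - t) * max A 0 + t * max B 0" using t by simp
    ultimately show ?thesis by linarith
  qed
  hence "(max ((1 - t) * A + t * B) 0)\<^sup>2 \<le> ((1 - t) * max A 0 + t * max B 0)\<^sup>2"
    by (intro power_mono) auto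
  also have "\<dots> \<le> (1 - t) * (max A 0)\<^sup>2 + t * (max B 0)\<^sup>2" by (rule sq_conv[OF t])
  finally show ?thesis .
qed

lemma phi_expand:
  fixes a h :: real
  shows "(max (a + h) 0)\<^sup>2 \<le> (max a 0)\<^sup>2 + 2 * max a 0 * h + h\<^sup>2"
proof (cases "0 \<le> a")
  case True
  have "(max (a + h) 0)\<^sup>2 \<le> (a + h)\<^sup>2" by (cases "0 \<le> a + h") (auto simp: max_def)
  thus ?thesis using True by (simp add: power2_eq_square algebra_simps)
next
  case False
  have "(max (a + h) 0)\<^sup>2 \<le> (max h 0)\<^sup>2" using False by (intro power_mono) auto
  also have "\<dots> \<le> h\<^sup>2" by (cases "0 \<le> h") (auto simp: max_def)
  finally show ?thesis using False by simp
qed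

lemma phi_le_iff:
  fixes s K :: real assumes K: "0 \<le> K"
  shows "(max s 0)\<^sup>2 \<le> K \<longleftrightarrow> s \<le> sqrt K"
proof (cases "0 \<le> s")
  case True
  show ?thesis
  proof
    assume "(max s 0)\<^sup>2 \<le> K"
    hence "s\<^sup>2 \<le> K" using True by simp
    thus "s \<le> sqrt K" by (rule real_le_rsqrt)
  next
    assume "s \<le> sqrt K"
    hence "s\<^sup>2 \<le> (sqrt K)\<^sup>2" using True by (intro power_mono) auto
    thus "(max s 0)\<^sup>2 \<le> K" using True K by simp
  qed
next
  case False
  have "0 \<le> sqrt K" using K by simp
  hence "s \<le> sqrt K" using False by linarith
  moreover have "(max s 0)\<^sup>2 \<le> K" using False K by (simp add: max_def)
  ultimately show ?thesis by simp
qed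

definition gg :: "('a \<Rightarrow> real) \<Rightarrow> real \<Rightarrow> real \<Rightarrow> 'a \<Rightarrow> real" where
  "gg F P \<gamma> z = (max (P + \<gamma> * F z) 0)\<^sup>2 / (2 * \<gamma>)"

lemma gg_convex:
  fixes F :: "'a::real_vector \<Rightarrow> real"
  assumes conv: "convex_on UNIV F" and g: "\<gamma> > 0"
  shows "convex_on UNIV (gg F P \<gamma>)"
proof (rule convex_onI)
  fix t :: real and a b :: 'a assume t: "0 < t" "t < 1"
  let ?c = "(1 - t) *\<^sub>R a + t *\<^sub>R b"
  have "F ?c \<le> (1 - t) * F a + t * F b" by (rule convex_onD[OF conv]) (use t in auto)
  hence "\<gamma> * F ?c \<le> \<gamma> * ((1 - t) * F a + t * F b)" using g by (intro mult_left_mono) auto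
  hence "P + \<gamma> * F ?c \<le> (1 - t) * (P + \<gamma> * F a) + t * (P + \<gamma> * F b)" by (simp add: algebra_simps)
  hence "(max (P + \<gamma> * F ?c) 0)\<^sup>2 \<le> (max ((1 - t) * (P + \<gamma> * F a) + t * (P + \<gamma> * F b)) 0)\<^sup>2"
    by (rule phi_mono)
  also have "\<dots> \<le> (1 - t) * (max (P + \<gamma> * F a) 0)\<^sup>2 + t * (max (P + \<gamma> * F b) 0)\<^sup>2"
    using t by (intro phi_conv) auto
  finally have le: "(max (P + \<gamma> * F ?c) 0)\<^sup>2 \<le> (1 - t) * (max (P + \<gamma> * F a) 0)\<^sup>2 + t * (max (P + \<gamma> * F b) 0)\<^sup>2" .
  have eq: "(1 - t) * gg F P \<gamma> a + t * gg F P \<gamma> b =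
      ((1 - t) * (max (P + \<gamma> * F a) 0)\<^sup>2 + t * (max (P + \<gamma> * F b) 0)\<^sup>2) / (2 * \<gamma>)"
    unfolding gg_def using g by (simp add: field_simps)
  show "gg F P \<gamma> ?c \<le> (1 - t) * gg F P \<gamma> a + t * gg F P \<gamma> b"
    unfolding eq unfolding gg_def using le g by (intro divide_right_mono) auto
qed simp

lemma gg_nonneg: "\<gamma> > 0 \<Longrightarrow> 0 \<le> gg F P \<gamma> z"
  unfolding gg_def by simp

lemma gg_lsc:
  fixes F :: "'a::topological_space \<Rightarrow> real"
  assumes lsc: "lsc F" and g: "\<gamma> > 0"
  shows "lsc (gg F P \<gamma>)"
  unfolding lsc_def
proof
  fix c :: real
  show "closed {z. gg F P \<gamma> z \<le> c}"
  proof (cases "c < 0")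
    case True
    have "\<not> gg F P \<gamma> z \<le> c" for z using gg_nonneg[OF g, of F P z] True by linarith
    hence "{z. gg F P \<gamma> z \<le> c} = {}" by blast
    thus ?thesis by simp
  next
    case False
    have "{z. gg F P \<gamma> z \<le> c} = {z. F z \<le> (sqrt (2 * \<gamma> * c) - P) / \<gamma>}"
    proof (intro Collect_cong)
      fix z
      have "gg F P \<gamma> z \<le> c \<longleftrightarrow> (max (P + \<gamma> * F z) 0)\<^sup>2 \<le> 2 * \<gamma> * c"
        unfolding gg_def using g by (simp add: divide_le_eq mult.commute mult.left_commute)
      also have "\<dots> \<longleftrightarrow> P + \<gamma> * F z \<le> sqrt (2 * \<gamma> * c)" using False g by (intro phi_le_iff) simp
      also have "\<dots> \<longleftrightarrow> F z \<le> (sqrt (2 * \<gamma> * c) - P) / \<gamma>" using g by (simp add: field_simps)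
      finally show "gg F P \<gamma> z \<le> c \<longleftrightarrow> F z \<le> (sqrt (2 * \<gamma> * c) - P) / \<gamma>" .
    qed
    thus ?thesis using lsc unfolding lsc_def by simp
  qed
qed

lemma gg_VI:
  fixes F :: "'a::real_inner \<Rightarrow> real"
  assumes conv: "convex_on UNIV F" and g: "\<gamma> > 0"
    and m: "\<forall>z. Gf (gg F P \<gamma>) \<gamma> x y \<le> Gf (gg F P \<gamma>) \<gamma> x z"
  shows "inner (x - y) (z - y) \<le> \<gamma> * (max (P + \<gamma> * F y) 0 * (F z - F y))"
proof (rule min_VI[OF g m])
  fix t :: real assume t: "0 < t" "t \<le> 1"
  define w where "w = max (P + \<gamma> * F y) 0"
  define d where "d = \<gamma> * (F z - F y)"
  have "F (y + t *\<^sub>R (z - y)) \<le> F y + t * (F z - F y)" using convex_seg[OF conv, of t y z] t by simp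
  hence "\<gamma> * F (y + t *\<^sub>R (z - y)) \<le> \<gamma> * (F y + t * (F z - F y))" using g by (intro mult_left_mono) auto
  hence "P + \<gamma> * F (y + t *\<^sub>R (z - y)) \<le> (P + \<gamma> * F y) + t * d" unfolding d_def by (simp add: algebra_simps)
  hence "(max (P + \<gamma> * F (y + t *\<^sub>R (z - y))) 0)\<^sup>2 \<le> (max ((P + \<gamma> * F y) + t * d) 0)\<^sup>2" by (rule phi_mono)
  also have "\<dots> \<le> w\<^sup>2 + 2 * w * (t * d) + (t * d)\<^sup>2" unfolding w_def by (rule phi_expand)
  finally have le: "(max (P + \<gamma> * F (y + t *\<^sub>R (z - y))) 0)\<^sup>2 \<le> w\<^sup>2 + 2 * w * (t * d) + (t * d)\<^sup>2" .
  have "gg F P \<gamma> (y + t *\<^sub>R (z - y)) - gg F P \<gamma> y \<le> (2 * w * (t * d) + (t * d)\<^sup>2) / (2 * \<gamma>)"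
  proof -
    have "gg F P \<gamma> (y + t *\<^sub>R (z - y)) \<le> (w\<^sup>2 + 2 * w * (t * d) + (t * d)\<^sup>2) / (2 * \<gamma>)"
      unfolding gg_def using le g by (intro divide_right_mono) auto
    moreover have "gg F P \<gamma> y = w\<^sup>2 / (2 * \<gamma>)" unfolding gg_def w_def ..
    ultimately show ?thesis by (simp add: add_divide_distrib diff_divide_distrib)
  qed
  also have "\<dots> = t * (w * (F z - F y)) + t\<^sup>2 * (d\<^sup>2 / (2 * \<gamma>))"
    unfolding d_def using g by (simp add: field_simps power2_eq_square)
  finally show "gg F P \<gamma> (y + t *\<^sub>R (z - y)) - gg F P \<gamma> y \<le> t * (max (P + \<gamma> * F y) 0 * (F z - F y)) + t\<^sup>2 * (d\<^sup>2 / (2 * \<gamma>))"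
    unfolding w_def .
qed

lemma prox_mono:
  fixes F :: "'a::real_inner \<Rightarrow> real"
  assumes mu: "0 < \<mu>1" "\<mu>1 < \<mu>2"
    and m1: "\<forall>z. Gf F \<mu>1 x y1 \<le> Gf F \<mu>1 x z" and m2: "\<forall>z. Gf F \<mu>2 x y2 \<le> Gf F \<mu>2 x z"
  shows "F y2 \<le> F y1"
proof -
  define k1 where "k1 = 1 / (2 * \<mu>1)"
  define k2 where "k2 = 1 / (2 * \<mu>2)"
  define N1 where "N1 = (norm (x - y1))\<^sup>2"
  define N2 where "N2 = (norm (x - y2))\<^sup>2"
  have k: "0 < k2" "k2 < k1" using mu unfolding k1_def k2_def by (auto simp: field_simps)
  have A: "F y1 + k1 * N1 \<le> F y2 + k1 * N2" using m1[rule_format, of y2]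
    unfolding Gf_def k1_def N1_def N2_def by simp
  have B: "F y2 + k2 * N2 \<le> F y1 + k2 * N1" using m2[rule_format, of y1]
    unfolding Gf_def k2_def N1_def N2_def by simp
  have "(k1 - k2) * (N1 - N2) \<le> 0" using A B by (simp add: algebra_simps)
  hence "N1 - N2 \<le> 0" using k by (simp add: mult_le_0_iff)
  hence "k2 * (N1 - N2) \<le> 0" using k by (simp add: mult_nonneg_nonpos)
  thus ?thesis using B by (simp add: algebra_simps)
qed

lemma max_mono_from_res:
  fixes B :: "'a::real_inner \<Rightarrow> 'a set"
  assumes mono: "monotone_op B" and surj: "\<And>z. resolvent (scale_op 1 B) z \<noteq> {}"
  shows "max_monotone B"
  unfolding max_monotone_def
proof (intro conjI allI impI)
  show "monotone_op B" by (fact mono)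
  fix A' assume h: "monotone_op A' \<and> (\<forall>x. B x \<subseteq> A' x)"
  show "A' = B"
  proof
    fix z
    show "A' z = B z"
    proof
      show "B z \<subseteq> A' z" using h by blast
      show "A' z \<subseteq> B z"
      proof
        fix v assume v: "v \<in> A' z"
        obtain y where "y \<in> resolvent (scale_op 1 B) (z + v)" using surj by blast
        then obtain b where b: "b \<in> B y" "z + v = y + b" unfolding resolvent_def scale_op_def by auto
        have "b \<in> A' y" using h b by blast
        hence "0 \<le> inner (z - y) (v - b)" using h v unfolding monotone_op_def by blast
        moreover have "v - b = y - z" using b(2) by (simp add: algebra_simps)
        ultimately have "0 \<le> inner (z - y) (y - z)" by simp
        hence "inner (z - y) (z - y) \<le> 0" by (metis inner_minus_right minus_diff_eq neg_0_le_iff_le)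
        hence "z - y = 0" by (metis inner_eq_zero_iff inner_ge_zero order_antisym)
        hence "z = y" by simp
        thus "v \<in> B z" using b by simp
      qed
    qed
  qed
qed

lemma lin_lower:
  fixes g :: "'a::real_inner \<Rightarrow> real"
  assumes conv: "convex_on UNIV g" and lsc: "lsc g"
  shows "\<exists>s>0. \<forall>z. g x - 1 - norm (z - x) / s \<le> g z"
proof -
  define U where "U = {z. g x - 1 < g z}"
  have "closed {z. g z \<le> g x - 1}" using lsc unfolding lsc_def by blast
  hence "open U" unfolding U_def by (simp add: open_closed Collect_neg_eq[symmetric] not_less)
  moreover have "x \<in> U" unfolding U_def by simp
  ultimately obtain r where r: "r > 0" "ball x r \<subseteq> U" using open_contains_ball by blast
  define s where "s = r/2"
  have s: "s > 0" "s < r" using r by (auto simp: s_def)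
  have lb: "g x - 1 - norm (z - x)/s \<le> g z" for z
  proof (cases "norm (z - x) < r")
    case True
    hence "z \<in> U" using r by (auto simp: dist_norm norm_minus_commute)
    moreover have "0 \<le> norm (z - x)/s" using s by simp
    ultimately show ?thesis unfolding U_def by simp
  next
    case False
    define n where "n = norm (z - x)"
    have n: "n \<ge> r" using False n_def by simp
    define t where "t = s/n"
    have t: "0 < t" "t \<le> 1" using n s by (auto simp: t_def)
    have "norm ((x + t *\<^sub>R (z - x)) - x) = t * n" using t by (simp add: n_def)
    also have "\<dots> = s" using n s by (simp add: t_def)
    finally have "x + t *\<^sub>R (z - x) \<in> U" using r s by (auto simp: dist_norm norm_minus_commute)
    hence "g x - 1 < g (x + t *\<^sub>R (z - x))" unfolding U_def by simp
    also have "\<dots> \<le> g x + t * (g z - g x)" using convex_seg[OF conv, of t x z] t by simp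
    finally have "-1 < t * (g z - g x)" by simp
    hence "-1/t < g z - g x" using t by (simp add: field_simps)
    moreover have "1/t = n/s" using n s by (simp add: t_def)
    ultimately show ?thesis unfolding n_def by simp
  qed
  thus ?thesis using s by blast
qed

lemma local_upper:
  fixes F :: "'a::{real_inner,complete_space} \<Rightarrow> real"
  assumes conv: "convex_on UNIV F" and lsc: "lsc F"
  shows "\<exists>\<rho>>0. \<exists>B. \<forall>h. norm h \<le> \<rho> \<longrightarrow> F (x + h) \<le> B"
proof -
  define G where "G = range (\<lambda>n::nat. {z. F z \<le> real n})"
  have cnt: "countable G" unfolding G_def by simp
  have U: "\<Union>G = UNIV" unfolding G_def using real_nat_ceiling_ge by blast
  have cl: "closedin euclidean T" if "T \<in> G" for T
    using that lsc unfolding G_def lsc_def by (auto simp: closed_closedin[symmetric])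
  have "\<not> (\<forall>T\<in>G. closedin euclidean T \<and> euclidean interior_of T = {})"
  proof
    assume "\<forall>T\<in>G. closedin euclidean T \<and> euclidean interior_of T = {}"
    hence "euclidean interior_of \<Union>G = {}"
      using Baire_category_alt[of euclidean G] completely_metrizable_space_euclidean cnt by blast
    thus False using U by simp
  qed
  then obtain T where T: "T \<in> G" "interior T \<noteq> {}" using cl by auto
  then obtain n :: nat where Tn: "T = {z. F z \<le> real n}" unfolding G_def by blast
  obtain z0 where "z0 \<in> interior T" using T by blast
  then obtain r where r: "r > 0" "ball z0 r \<subseteq> T" by (auto simp: mem_interior)
  show ?thesis
  proof (intro exI conjI allI impI)
    show "r/4 > 0" using r by simp
    fix h :: 'a assume h: "norm h \<le> r/4"
    have e: "x + h = (1 - 1/2) *\<^sub>R (2 *\<^sub>R x - z0) + (1/2) *\<^sub>R (z0 + 2 *\<^sub>R h)"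
      by (simp add: algebra_simps)
    have "dist z0 (z0 + 2 *\<^sub>R h) < r" using h r by (simp add: dist_norm)
    hence "F (z0 + 2 *\<^sub>R h) \<le> real n" using r Tn by auto
    moreover have "F (x + h) \<le> (1 - 1/2) * F (2 *\<^sub>R x - z0) + (1/2) * F (z0 + 2 *\<^sub>R h)"
      unfolding e by (rule convex_onD[OF conv]) auto
    ultimately show "F (x + h) \<le> (1 - 1/2) * F (2 *\<^sub>R x - z0) + (1/2) * real n" by linarith
  qed
qed

lemma alg_key:
  fixes l m A Bb C D :: real
  assumes lm: "m < l" "0 < m" and D: "0 \<le> D" "D = A + Bb - 2 * C"
    and ineq: "l * A + m * Bb \<le> (l + m) * C"
  shows "D \<le> Bb - A"
proof -
  have "(l + m) * D = (l + m) * (A + Bb) - 2 * ((l + m) * C)" unfolding D(2) by (simp add: algebra_simps)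
  also have "\<dots> \<le> (l + m) * (A + Bb) - 2 * (l * A + m * Bb)" using ineq by (intro diff_left_mono) simp
  also have "\<dots> = (l - m) * (Bb - A)" by (simp add: algebra_simps)
  finally have h: "(l + m) * D \<le> (l - m) * (Bb - A)" .
  have "0 \<le> (l + m) * D" using lm D by simp
  hence "0 \<le> (l - m) * (Bb - A)" using h by linarith
  hence BA: "0 \<le> Bb - A" using lm by (simp add: zero_le_mult_iff)
  have "(l - m) * (Bb - A) \<le> (l + m) * (Bb - A)" using BA lm by (intro mult_right_mono) auto
  hence "(l + m) * D \<le> (l + m) * (Bb - A)" using h by linarith
  thus ?thesis using lm by simp
qed

lemma subgrad_exists:
  fixes F :: "'a::{real_inner,complete_space} \<Rightarrow> real"
  assumes conv: "convex_on UNIV F" and lsc: "lsc F"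
  shows "\<exists>u. \<forall>z. F x + inner u (z - x) \<le> F z"
proof -
  obtain s where s: "s > 0" "\<forall>z. F x - 1 - norm (z - x) / s \<le> F z" using lin_lower[OF conv lsc] by blast
  obtain \<rho> B where rho: "\<rho> > 0" "\<forall>h. norm h \<le> \<rho> \<longrightarrow> F (x + h) \<le> B" using local_upper[OF conv lsc] by blast
  define mu where "mu = (\<lambda>k. inverse (real (Suc k)))"
  define P where "P k = prox (mu k) F x" for k
  define v where "v k = (1 / mu k) *\<^sub>R (x - P k)" for k
  have mu_pos: "mu k > 0" for k unfolding mu_def by simp
  have mu_le1: "mu k \<le> 1" for k unfolding mu_def by (simp add: inverse_le_1_iff)
  have mu_lt: "mu j < mu k" if "k < j" for k j
    unfolding mu_def using that by (intro less_imp_inverse_less) auto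
  have Pmin: "\<forall>z. Gf F (mu k) x (P k) \<le> Gf F (mu k) x z" for k
  proof -
    obtain L where "\<forall>z. L \<le> Gf F (mu k) x z" using lower_bound[OF conv lsc mu_pos] by blast
    thus ?thesis unfolding P_def by (rule prox_min[OF conv lsc mu_pos])
  qed
  have Pv: "P k = x - mu k *\<^sub>R v k" for k
  proof -
    have one: "mu k * (1 / mu k) = 1" using mu_pos[of k] by simp
    have "mu k *\<^sub>R v k = x - P k" unfolding v_def scaleR_scaleR one by simp
    thus ?thesis by (simp add: algebra_simps)
  qed
  have sub: "F (P k) + inner (v k) (z - P k) \<le> F z" for k z
  proof -
    have "inner (x - P k) (z - P k) \<le> mu k * (F z - F (P k))" by (rule min_VI_convex[OF conv mu_pos Pmin])
    hence "inner (x - P k) (z - P k) / mu k \<le> F z - F (P k)" using mu_pos[of k] by (simp add: divide_le_eq mult.commute)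
    moreover have "inner (v k) (z - P k) = inner (x - P k) (z - P k) / mu k" by (simp add: v_def)
    ultimately show ?thesis by simp
  qed
  define K where "K = (B - F x + 1 + 1 / (4 * (s * s))) / \<rho>"
  have B0: "F x \<le> B" using rho(2)[rule_format, of 0] rho(1) by simp
  have K0: "0 \<le> K" unfolding K_def using B0 rho(1) s(1) by simp
  have bnd: "norm (v k) \<le> K" for k
  proof -
    define n where "n = norm (v k)"
    have h0: "- 1 / (4 * (s * s)) \<le> n * n - n / s"
    proof -
      have "0 \<le> (n - 1 / (2 * s))\<^sup>2" by simp
      also have "(n - 1 / (2 * s))\<^sup>2 = (n * n - n / s) + 1 / (4 * (s * s))"
        using s(1) by (simp add: power2_eq_square field_simps)
      finally show ?thesis by simp
    qed
    have q: "- 1 / (4 * (s * s)) \<le> mu k * (n * n - n / s)"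
    proof (cases "n * n - n / s \<ge> 0")
      case True
      hence "0 \<le> mu k * (n * n - n / s)" using mu_pos[of k] by simp
      moreover have "- 1 / (4 * (s * s)) \<le> 0" by simp
      ultimately show ?thesis by linarith
    next
      case False
      have "1 * (n * n - n / s) \<le> mu k * (n * n - n / s)"
        using False mu_le1[of k] by (intro mult_right_mono_neg) auto
      thus ?thesis using h0 by simp
    qed
    have q2: "- 1 / (4 * (s * s)) \<le> mu k * (n * n) - mu k * n / s"
      using q by (simp add: right_diff_distrib)
    show ?thesis
    proof (cases "n = 0")
      case True
      thus ?thesis using K0 n_def by simp
    next
      case False
      hence npos: "n > 0" using n_def by simp
      define h where "h = (\<rho> / n) *\<^sub>R v k"
      have nh: "norm h = \<rho>" unfolding h_def n_def using npos rho(1) n_def by simp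
      have "F (P k) + inner (v k) (x + h - P k) \<le> F (x + h)" by (rule sub)
      also have "\<dots> \<le> B" using rho(2) nh by simp
      finally have i1: "F (P k) + inner (v k) (x + h - P k) \<le> B" .
      have xe: "x + h - P k = mu k *\<^sub>R v k + h" using Pv[of k] by simp
      have "inner (v k) (x + h - P k) = mu k * inner (v k) (v k) + (\<rho> / n) * inner (v k) (v k)"
        unfolding xe unfolding h_def inner_add_right inner_scaleR_right ..
      also have "inner (v k) (v k) = n * n" unfolding n_def by (simp add: power2_norm_eq_inner[symmetric] power2_eq_square)
      finally have i2: "inner (v k) (x + h - P k) = mu k * (n * n) + \<rho> * n" using npos by simp
      have "norm (P k - x) = mu k * n" using Pv[of k] mu_pos[of k] n_def by simp
      hence i3: "F x - 1 - mu k * n / s \<le> F (P k)" using s(2)[rule_format, of "P k"] by simp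
      have "\<rho> * n \<le> B - F x + 1 + 1 / (4 * (s * s))" using i1 i2 i3 q2 by linarith
      hence "n * \<rho> \<le> B - F x + 1 + 1 / (4 * (s * s))" by (simp add: mult.commute)
      thus ?thesis unfolding K_def n_def[symmetric] using rho(1) by (simp add: pos_le_divide_eq)
    qed
  qed
  have key: "(norm (v k - v j))\<^sup>2 \<le> (norm (v j))\<^sup>2 - (norm (v k))\<^sup>2" if kj: "k \<le> j" for k j
  proof (cases "k = j")
    case True thus ?thesis by simp
  next
    case False
    hence lt: "k < j" using kj by simp
    have s1: "F (P k) + inner (v k) (P j - P k) \<le> F (P j)" by (rule sub)
    have s2: "F (P j) + inner (v j) (P k - P j) \<le> F (P k)" by (rule sub)
    have e1: "P j - P k = mu k *\<^sub>R v k - mu j *\<^sub>R v j" using Pv[of j] Pv[of k] by (simp add: algebra_simps)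
    have e2: "P k - P j = mu j *\<^sub>R v j - mu k *\<^sub>R v k" using Pv[of j] Pv[of k] by (simp add: algebra_simps)
    have "inner (v k) (P j - P k) + inner (v j) (P k - P j) \<le> 0" using s1 s2 by linarith
    hence "mu k * inner (v k) (v k) - mu j * inner (v k) (v j) + (mu j * inner (v j) (v j) - mu k * inner (v j) (v k)) \<le> 0"
      unfolding e1 e2 inner_diff_right inner_scaleR_right .
    hence ineq: "mu k * inner (v k) (v k) + mu j * inner (v j) (v j) \<le> (mu k + mu j) * inner (v k) (v j)"
      by (simp add: inner_commute algebra_simps)
    have D: "(norm (v k - v j))\<^sup>2 = inner (v k) (v k) + inner (v j) (v j) - 2 * inner (v k) (v j)"
      unfolding power2_norm_eq_inner by (simp add: inner_diff_left inner_diff_right inner_commute)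
    have "(norm (v k - v j))\<^sup>2 \<le> inner (v j) (v j) - inner (v k) (v k)"
      by (rule alg_key[OF mu_lt[OF lt] mu_pos _ D ineq]) simp
    thus ?thesis by (simp add: power2_norm_eq_inner)
  qed
  define a where "a k = (norm (v k))\<^sup>2" for k
  have amono: "a k \<le> a j" if "k \<le> j" for k j
    using key[OF that] unfolding a_def by (smt (verit) zero_le_power2)
  have "Bseq a"
  proof (rule BseqI')
    fix k
    have "(norm (v k))\<^sup>2 \<le> K\<^sup>2" using bnd[of k] by (intro power_mono) auto
    thus "norm (a k) \<le> K\<^sup>2" unfolding a_def by simp
  qed
  hence "convergent a" using amono by (intro Bseq_mono_convergent) auto
  hence ca: "Cauchy a" by (rule convergent_Cauchy)
  have "Cauchy v"
  proof (rule CauchyI)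
    fix e :: real assume e: "0 < e"
    obtain M where M: "\<forall>m\<ge>M. \<forall>n\<ge>M. norm (a m - a n) < e\<^sup>2" using CauchyD[OF ca, of "e\<^sup>2"] e by auto
    have "norm (v m - v n) < e" if "m \<ge> M" "n \<ge> M" for m n
    proof -
      have d: "(norm (v k - v j))\<^sup>2 < e\<^sup>2" if "k \<ge> M" "j \<ge> M" "k \<le> j" for k j
      proof -
        have "(norm (v k - v j))\<^sup>2 \<le> a j - a k" using key[OF that(3)] unfolding a_def .
        also have "\<dots> \<le> norm (a k - a j)" by simp
        also have "\<dots> < e\<^sup>2" using M that by blast
        finally show ?thesis .
      qed
      have "(norm (v m - v n))\<^sup>2 < e\<^sup>2"
      proof (cases "m \<le> n")
        case True thus ?thesis using d that by blast
      next
        case False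
        hence "(norm (v n - v m))\<^sup>2 < e\<^sup>2" using d that by simp
        thus ?thesis by (simp add: norm_minus_commute)
      qed
      thus ?thesis using e by (simp add: power_less_imp_less_base)
    qed
    thus "\<exists>M. \<forall>m\<ge>M. \<forall>n\<ge>M. norm (v m - v n) < e" by blast
  qed
  hence "convergent v" by (simp add: Cauchy_convergent_iff)
  then obtain u where vu: "v \<longlonglongrightarrow> u" by (auto simp: convergent_def)
  have mu0: "mu \<longlonglongrightarrow> 0" unfolding mu_def by (rule LIMSEQ_inverse_real_of_nat)
  have "(\<lambda>k. x - mu k *\<^sub>R v k) \<longlonglongrightarrow> x - 0 *\<^sub>R u" by (intro tendsto_intros mu0 vu)
  moreover have "P = (\<lambda>k. x - mu k *\<^sub>R v k)" using Pv by (simp add: fun_eq_iff)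
  ultimately have Px: "P \<longlonglongrightarrow> x" by simp
  show ?thesis
  proof (intro exI allI)
    fix z
    show "F x + inner u (z - x) \<le> F z"
    proof (rule ccontr)
      assume "\<not> F x + inner u (z - x) \<le> F z"
      hence lt: "F z < F x + inner u (z - x)" by simp
      define \<eta> where "\<eta> = (F x + inner u (z - x) - F z) / 3"
      have eta: "\<eta> > 0" using lt by (simp add: \<eta>_def)
      have "open {y. F x - \<eta> < F y}"
        using lsc unfolding lsc_def by (simp add: open_closed Collect_neg_eq[symmetric] not_less)
      hence ev1: "eventually (\<lambda>k. P k \<in> {y. F x - \<eta> < F y}) sequentially"
        using Px eta by (intro topological_tendstoD) auto
      have "(\<lambda>k. inner (v k) (z - P k)) \<longlonglongrightarrow> inner u (z - x)" by (intro tendsto_intros vu Px)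
      hence ev2: "eventually (\<lambda>k. inner u (z - x) - \<eta> < inner (v k) (z - P k)) sequentially"
        using eta by (intro order_tendstoD(1)) auto
      obtain k where k: "F x - \<eta> < F (P k)" "inner u (z - x) - \<eta> < inner (v k) (z - P k)"
        using eventually_happens[OF eventually_conj[OF ev1 ev2]] by auto
      have "F (P k) + inner (v k) (z - P k) \<le> F z" by (rule sub)
      moreover have "3 * \<eta> = F x + inner u (z - x) - F z" unfolding \<eta>_def by simp
      ultimately show False using k eta by linarith
    qed
  qed
qed

lemma part2:
  fixes f :: "'n::finite \<Rightarrow> 'a::{real_inner, complete_space} \<Rightarrow> real"
    and i :: 'n
  assumes conv: "convex_on UNIV (f i)" and lsc: "lsc (f i)"
    and sub_ex: "\<And>x. \<exists>u. \<forall>z. f i x + inner u (z - x) \<le> f i z"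
    and g: "\<gamma> > 0"
  shows "let cond = (\<lambda>w::real. 0 \<le> w \<and>
                     (p $ i + \<gamma> * f i x \<le> 0 \<longrightarrow> w = 0) \<and>
                     (p $ i + \<gamma> * f i x > 0 \<longrightarrow> w = p $ i + \<gamma> * f i (prox (\<gamma> * w) (f i) x)))
       in (\<exists>!w. cond w) \<and>
          (\<forall>w. cond w \<longrightarrow>
             resolvent (scale_op \<gamma> (B_op f i)) (x, p) =
               {(if p $ i + \<gamma> * f i x \<le> 0 then x else prox (\<gamma> * w) (f i) x,
                 \<chi> j. if j = i then w else p $ j)})"
proof -
  define cond where "cond = (\<lambda>w::real. 0 \<le> w \<and>
                     (p $ i + \<gamma> * f i x \<le> 0 \<longrightarrow> w = 0) \<and>
                     (p $ i + \<gamma> * f i x > 0 \<longrightarrow> w = p $ i + \<gamma> * f i (prox (\<gamma> * w) (f i) x)))"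
  have pmin: "\<forall>z. Gf (f i) \<mu> x (prox \<mu> (f i) x) \<le> Gf (f i) \<mu> x z" if mu: "\<mu> > 0" for \<mu>
  proof -
    obtain L where "\<forall>z. L \<le> Gf (f i) \<mu> x z" using lower_bound[OF conv lsc mu] by blast
    thus ?thesis by (rule prox_min[OF conv lsc mu])
  qed
  have pVI: "inner (x - prox \<mu> (f i) x) (z - prox \<mu> (f i) x) \<le> \<mu> * (f i z - f i (prox \<mu> (f i) x))"
    if mu: "\<mu> > 0" for \<mu> z
    by (rule min_VI_convex[OF conv mu pmin[OF mu]])
  have VIprox: "prox \<mu> (f i) x = y" if mu: "\<mu> > 0" and vi: "\<forall>z. inner (x - y) (z - y) \<le> \<mu> * (f i z - f i y)" for \<mu> y
    by (rule prox_eq[OF conv mu VI_min[OF mu vi]])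
  have Fle: "f i y \<le> f i x" if mu: "\<mu> > 0" and vi: "\<forall>z. inner (x - y) (z - y) \<le> \<mu> * (f i z - f i y)" for \<mu> y
  proof -
    have "0 \<le> inner (x - y) (x - y)" by simp
    also have "\<dots> \<le> \<mu> * (f i x - f i y)" using vi by blast
    finally show ?thesis using mu by (simp add: zero_le_mult_iff)
  qed
  have pos: "w > 0" if c: "p $ i + \<gamma> * f i x > 0" and cw: "cond w" for w
  proof (rule ccontr)
    assume "\<not> w > 0"
    hence w0: "w = 0" using cw unfolding cond_def by simp
    hence "w = p $ i + \<gamma> * f i x" using cw c unfolding cond_def by (simp add: prox_def)
    thus False using w0 c by simp
  qed
  have uniq: "w1 = w2" if c1: "cond w1" and c2: "cond w2" for w1 w2
  proof (cases "p $ i + \<gamma> * f i x \<le> 0")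
    case True thus ?thesis using c1 c2 unfolding cond_def by simp
  next
    case False
    hence c: "p $ i + \<gamma> * f i x > 0" by simp
    have w1: "w1 > 0" by (rule pos[OF c c1])
    have w2: "w2 > 0" by (rule pos[OF c c2])
    have e1: "w1 = p $ i + \<gamma> * f i (prox (\<gamma> * w1) (f i) x)" using c1 c unfolding cond_def by simp
    have e2: "w2 = p $ i + \<gamma> * f i (prox (\<gamma> * w2) (f i) x)" using c2 c unfolding cond_def by simp
    have lt: False if "wa < wb" "wa > 0"
      "wa = p $ i + \<gamma> * f i (prox (\<gamma> * wa) (f i) x)" "wb = p $ i + \<gamma> * f i (prox (\<gamma> * wb) (f i) x)" for wa wb
    proof -
      have a1: "\<gamma> * wa > 0" using that g by simp
      have a2: "\<gamma> * wa < \<gamma> * wb" using that g by simp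
      have a3: "\<gamma> * wb > 0" using that g by simp
      have "f i (prox (\<gamma> * wb) (f i) x) \<le> f i (prox (\<gamma> * wa) (f i) x)"
        by (rule prox_mono[OF a1 a2 pmin[OF a1] pmin[OF a3]])
      hence "\<gamma> * f i (prox (\<gamma> * wb) (f i) x) \<le> \<gamma> * f i (prox (\<gamma> * wa) (f i) x)"
        using g by (intro mult_left_mono) auto
      thus False using that by linarith
    qed
    show ?thesis
    proof (cases w1 w2 rule: linorder_cases)
      case less thus ?thesis using lt[OF less w1 e1 e2] by blast
    next
      case greater thus ?thesis using lt[OF greater w2 e2 e1] by blast
    qed
  qed
  have ex: "\<exists>w. cond w"
  proof (cases "p $ i + \<gamma> * f i x \<le> 0")
    case True thus ?thesis unfolding cond_def by (intro exI[of _ 0]) simp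
  next
    case False
    hence c: "p $ i + \<gamma> * f i x > 0" by simp
    have "\<forall>z. 0 \<le> Gf (gg (f i) (p $ i) \<gamma>) \<gamma> x z"
    proof
      fix z
      have "0 \<le> gg (f i) (p $ i) \<gamma> z" by (rule gg_nonneg[OF g])
      moreover have "0 \<le> (norm (x - z))\<^sup>2 / (2 * \<gamma>)" using g by simp
      ultimately show "0 \<le> Gf (gg (f i) (p $ i) \<gamma>) \<gamma> x z" unfolding Gf_def by simp
    qed
    then obtain y where ym: "\<forall>z. Gf (gg (f i) (p $ i) \<gamma>) \<gamma> x y \<le> Gf (gg (f i) (p $ i) \<gamma>) \<gamma> x z"
      using min_exists[OF gg_convex[OF conv g] gg_lsc[OF lsc g] g] by blast
    define w where "w = max (p $ i + \<gamma> * f i y) 0"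
    have vi: "inner (x - y) (z - y) \<le> \<gamma> * (w * (f i z - f i y))" for z
      unfolding w_def by (rule gg_VI[OF conv g ym])
    show ?thesis
    proof (cases "w = 0")
      case True
      have "inner (x - y) (x - y) \<le> 0" using vi[of x] True by simp
      hence "y = x" by (metis eq_iff_diff_eq_0 inner_eq_zero_iff inner_ge_zero order_antisym)
      hence "p $ i + \<gamma> * f i x \<le> 0" using True unfolding w_def by (simp add: max_def split: if_splits)
      thus ?thesis using c by simp
    next
      case False
      hence wp: "w > 0" "w = p $ i + \<gamma> * f i y" unfolding w_def by (auto simp: max_def split: if_splits)
      have gw: "\<gamma> * w > 0" using g wp by simp
      have "prox (\<gamma> * w) (f i) x = y"
        by (rule VIprox[OF gw]) (use vi in \<open>simp add: mult.assoc\<close>)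
      hence "cond w" unfolding cond_def using wp c by simp
      thus ?thesis by blast
    qed
  qed
  have res: "resolvent (scale_op \<gamma> (B_op f i)) (x, p) =
               {(if p $ i + \<gamma> * f i x \<le> 0 then x else prox (\<gamma> * w) (f i) x,
                 \<chi> j. if j = i then w else p $ j)}" if cw: "cond w" for w
  proof -
    define Q where "Q = (\<chi> j. if j = i then w else p $ j)"
    have qQ: "q = Q \<longleftrightarrow> q $ i = w \<and> (\<forall>j. j \<noteq> i \<longrightarrow> q $ j = p $ j)" for q
      unfolding Q_def vec_eq_iff by auto
    have key: "(y, q) \<in> resolvent (scale_op \<gamma> (B_op f i)) (x, p) \<longleftrightarrow>
        y = (if p $ i + \<gamma> * f i x \<le> 0 then x else prox (\<gamma> * w) (f i) x) \<and> q = Q" for y q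
    proof (cases "p $ i + \<gamma> * f i x \<le> 0")
      case True
      hence w0: "w = 0" using cw unfolding cond_def by simp
      show ?thesis
      proof
        assume "(y, q) \<in> resolvent (scale_op \<gamma> (B_op f i)) (x, p)"
        hence r: "(\<forall>j. j \<noteq> i \<longrightarrow> q$j = p$j) \<and>
          ((q$i = 0 \<and> y = x \<and> p$i + \<gamma> * f i x \<le> 0) \<or>
           (q$i > 0 \<and> q$i = p$i + \<gamma> * f i y \<and> (\<forall>z. inner (x - y) (z - y) \<le> (\<gamma> * q$i) * (f i z - f i y))))"
          using res_char[where f=f and i=i, OF g sub_ex] by blast
        have "\<not> (q$i > 0 \<and> q$i = p$i + \<gamma> * f i y \<and> (\<forall>z. inner (x - y) (z - y) \<le> (\<gamma> * q$i) * (f i z - f i y)))"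
        proof
          assume h: "q$i > 0 \<and> q$i = p$i + \<gamma> * f i y \<and> (\<forall>z. inner (x - y) (z - y) \<le> (\<gamma> * q$i) * (f i z - f i y))"
          have "\<gamma> * q$i > 0" using h g by simp
          hence "f i y \<le> f i x" using Fle h by blast
          hence "\<gamma> * f i y \<le> \<gamma> * f i x" using g by (intro mult_left_mono) auto
          thus False using h True by linarith
        qed
        thus "y = (if p $ i + \<gamma> * f i x \<le> 0 then x else prox (\<gamma> * w) (f i) x) \<and> q = Q"
          using r True w0 qQ by auto
      next
        assume "y = (if p $ i + \<gamma> * f i x \<le> 0 then x else prox (\<gamma> * w) (f i) x) \<and> q = Q"
        hence "y = x" "q $ i = 0" "\<forall>j. j \<noteq> i \<longrightarrow> q $ j = p $ j" using True w0 qQ by auto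
        thus "(y, q) \<in> resolvent (scale_op \<gamma> (B_op f i)) (x, p)"
          using res_char[where f=f and i=i, OF g sub_ex] True by blast
      qed
    next
      case False
      hence c: "p $ i + \<gamma> * f i x > 0" by simp
      have wp: "w > 0" by (rule pos[OF c cw])
      have we: "w = p $ i + \<gamma> * f i (prox (\<gamma> * w) (f i) x)" using cw c unfolding cond_def by simp
      show ?thesis
      proof
        assume "(y, q) \<in> resolvent (scale_op \<gamma> (B_op f i)) (x, p)"
        hence r: "(\<forall>j. j \<noteq> i \<longrightarrow> q$j = p$j) \<and>
          ((q$i = 0 \<and> y = x \<and> p$i + \<gamma> * f i x \<le> 0) \<or>
           (q$i > 0 \<and> q$i = p$i + \<gamma> * f i y \<and> (\<forall>z. inner (x - y) (z - y) \<le> (\<gamma> * q$i) * (f i z - f i y))))"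
          using res_char[where f=f and i=i, OF g sub_ex] by blast
        hence h: "q$i > 0" "q$i = p$i + \<gamma> * f i y" "\<forall>z. inner (x - y) (z - y) \<le> (\<gamma> * q$i) * (f i z - f i y)"
          using c by auto
        have gq: "\<gamma> * q$i > 0" using h g by simp
        have py: "prox (\<gamma> * q$i) (f i) x = y" by (rule VIprox[OF gq h(3)])
        have "cond (q$i)" unfolding cond_def using h py c by simp
        hence "q$i = w" using uniq cw by blast
        thus "y = (if p $ i + \<gamma> * f i x \<le> 0 then x else prox (\<gamma> * w) (f i) x) \<and> q = Q"
          using py r c qQ by auto
      next
        assume "y = (if p $ i + \<gamma> * f i x \<le> 0 then x else prox (\<gamma> * w) (f i) x) \<and> q = Q"
        hence yq: "y = prox (\<gamma> * w) (f i) x" "q $ i = w" "\<forall>j. j \<noteq> i \<longrightarrow> q $ j = p $ j"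
          using c qQ by auto
        have gw: "\<gamma> * w > 0" using g wp by simp
        have "\<forall>z. inner (x - y) (z - y) \<le> (\<gamma> * q$i) * (f i z - f i y)"
          using pVI[OF gw] yq by simp
        thus "(y, q) \<in> resolvent (scale_op \<gamma> (B_op f i)) (x, p)"
          using res_char[where f=f and i=i, OF g sub_ex] yq wp we by auto
      qed
    qed
    show ?thesis
    proof (rule set_eqI)
      fix z :: "'a \<times> (real^'n)"
      obtain y q where z: "z = (y, q)" by (cases z)
      show "z \<in> resolvent (scale_op \<gamma> (B_op f i)) (x, p) \<longleftrightarrow>
        z \<in> {(if p $ i + \<gamma> * f i x \<le> 0 then x else prox (\<gamma> * w) (f i) x, \<chi> j. if j = i then w else p $ j)}"
        unfolding z key Q_def by simp
    qed
  qed
  have "(\<exists>!w. cond w) \<and> (\<forall>w. cond w \<longrightarrow>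
             resolvent (scale_op \<gamma> (B_op f i)) (x, p) =
               {(if p $ i + \<gamma> * f i x \<le> 0 then x else prox (\<gamma> * w) (f i) x,
                 \<chi> j. if j = i then w else p $ j)})"
    using ex uniq res by blast
  thus ?thesis unfolding cond_def Let_def .
qed

lemma let_ex:
  assumes "let c = C in (\<exists>!w. c w) \<and> (\<forall>w. c w \<longrightarrow> R = g w)"
  shows "\<exists>w. R = g w"
proof -
  from assms have "(\<exists>w. C w) \<and> (\<forall>w. C w \<longrightarrow> R = g w)" unfolding Let_def by blast
  thus ?thesis by blast
qed

theorem proposition3p3:
  fixes f :: "'n::finite \<Rightarrow> 'a::{real_inner, complete_space} \<Rightarrow> real"
    and i :: 'n
  assumes conv: "convex_on UNIV (f i)"
    and lsc: "lsc (f i)"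
  shows "max_monotone (B_op f i) \<and>
    (\<forall>x p \<gamma>. \<gamma> > 0 \<longrightarrow>
      (let cond = (\<lambda>w::real. 0 \<le> w \<and>
                     (p $ i + \<gamma> * f i x \<le> 0 \<longrightarrow> w = 0) \<and>
                     (p $ i + \<gamma> * f i x > 0 \<longrightarrow> w = p $ i + \<gamma> * f i (prox (\<gamma> * w) (f i) x)))
       in (\<exists>!w. cond w) \<and>
          (\<forall>w. cond w \<longrightarrow>
             resolvent (scale_op \<gamma> (B_op f i)) (x, p) =
               {(if p $ i + \<gamma> * f i x \<le> 0 then x else prox (\<gamma> * w) (f i) x,
                 \<chi> j. if j = i then w else p $ j)})))"
proof -
  have sub_ex: "\<And>x. \<exists>u. \<forall>z. f i x + inner u (z - x) \<le> f i z"
    using subgrad_exists[OF conv lsc] by blast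
  have mm: "max_monotone (B_op f i)"
  proof (rule max_mono_from_res[OF B_monotone])
    fix z :: "'a \<times> (real^'n)"
    obtain x p where z: "z = (x, p)" by (cases z)
    have "let cond = (\<lambda>w::real. 0 \<le> w \<and>
                     (p $ i + 1 * f i x \<le> 0 \<longrightarrow> w = 0) \<and>
                     (p $ i + 1 * f i x > 0 \<longrightarrow> w = p $ i + 1 * f i (prox (1 * w) (f i) x)))
       in (\<exists>!w. cond w) \<and>
          (\<forall>w. cond w \<longrightarrow>
             resolvent (scale_op 1 (B_op f i)) (x, p) =
               {(if p $ i + 1 * f i x \<le> 0 then x else prox (1 * w) (f i) x,
                 \<chi> j. if j = i then w else p $ j)})"
      by (rule part2[where f=f and i=i, OF conv lsc sub_ex]) simp
    hence "\<exists>w. resolvent (scale_op 1 (B_op f i)) (x, p) =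
               {(if p $ i + 1 * f i x \<le> 0 then x else prox (1 * w) (f i) x,
                 \<chi> j. if j = i then w else p $ j)}"
      by (rule let_ex)
    thus "resolvent (scale_op 1 (B_op f i)) z \<noteq> {}" unfolding z by auto
  qed
  show ?thesis
  proof (intro conjI allI impI)
    show "max_monotone (B_op f i)" by (rule mm)
  next
    fix x p and \<gamma> :: real
    assume g: "\<gamma> > 0"
    show "let cond = (\<lambda>w::real. 0 \<le> w \<and>
                     (p $ i + \<gamma> * f i x \<le> 0 \<longrightarrow> w = 0) \<and>
                     (p $ i + \<gamma> * f i x > 0 \<longrightarrow> w = p $ i + \<gamma> * f i (prox (\<gamma> * w) (f i) x)))
       in (\<exists>!w. cond w) \<and>
          (\<forall>w. cond w \<longrightarrow>
             resolvent (scale_op \<gamma> (B_op f i)) (x, p) =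
               {(if p $ i + \<gamma> * f i x \<le> 0 then x else prox (\<gamma> * w) (f i) x,
                 \<chi> j. if j = i then w else p $ j)})"
      by (rule part2[where f=f and i=i, OF conv lsc sub_ex g])
  qed
qed

end
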